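(* Let $V_L=V_{L,\omega}$ be the random potential described in the context, where $B$ satisfies $|B(x)|\le C_B\langle x\rangle^{-d-1-\epsilon}$ for some $C_B$ and $\epsilon>0$. Let $\alpha\in[0,1/2)$ and $O=\Lambda_{1/2}$. Then for almost all $\omega$ there exists a constant $C_\omega$ such that for all sufficiently large $L\le L'$ $$\sup_{x\in\Lambda_L}\big|1_{L^{1/2+\alpha}O}(x)\,(V_L(x)-V_{L'}(x))\big|\le C_\omega L^{-\epsilon}.$$
   Context: $\Lambda_L=[-L/2,L/2)^d$, $\langle x\rangle=\sqrt{1+|x|^2}$, $aO=\{ax:x\in O\}$, $1_A$ the indicator function. For $h:\mathbb{R}^d\to\mathbb{C}$, $h_{\#,L}$ is the $L$-periodic extension of $h|_{\Lambda_L}$ (i.e. $h_{\#,L}(y)=h(x)$ for the unique $x\in\Lambda_L$ with $x-y\in(L\mathbb{Z})^d$). The potential is $V_{L,\omega}(x)=\int_{\Lambda_L}B_{\#,L}(x-y)\,d\mu_\omega(y)$, with $\mu_\omega=\sum_{\gamma\ge1}v_\gamma(\omega)\delta_{y_\gamma(\omega)}$, where $\{y_\gamma\}$ is a Poisson point process on $\mathbb{R}^d$ of unit homogeneous density and the $v_\gamma$ are i.i.d. real random weights independent of the points with $\mathbf{E}v_\gamma^k<\infty$ for $k=1,\dots,d+1$; $B:\mathbb{R}^d\to\mathbb{R}$ is measurable. *)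

theory Defs
  imports "HOL-Probability.Probability"
begin

definition cube :: "real \<Rightarrow> (real^'d) set" where
  "cube L = {x. \<forall>i. - L / 2 \<le> x $ i \<and> x $ i < L / 2}"

definition jbr :: "real^'d \<Rightarrow> real" where
  "jbr x = sqrt (1 + (norm x)\<^sup>2)"

text \<open>L-periodic extension of h restricted to Lambda_L.\<close>
definition per_ext :: "real \<Rightarrow> (real^'d \<Rightarrow> 'b) \<Rightarrow> real^'d \<Rightarrow> 'b" where
  "per_ext L h y = h (THE x. x \<in> cube L \<and> (\<forall>i. \<exists>k::int. x $ i - y $ i = L * of_int k))"

text \<open>V_{L,omega}(x) = integral over Lambda_L of B_{#,L}(x-y) d mu_omega(y),
  mu_omega = sum_gamma v_gamma(omega) delta_{y_gamma(omega)}.\<close>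
definition potential ::
  "real \<Rightarrow> (nat \<Rightarrow> 'w \<Rightarrow> real^'d) \<Rightarrow> (nat \<Rightarrow> 'w \<Rightarrow> real) \<Rightarrow> (real^'d \<Rightarrow> real)
     \<Rightarrow> 'w \<Rightarrow> real^'d \<Rightarrow> real" where
  "potential L y v B \<omega> x =
     (\<Sum>\<gamma>\<in>{\<gamma>. y \<gamma> \<omega> \<in> cube L}. v \<gamma> \<omega> * per_ext L B (x - y \<gamma> \<omega>))"

definition npts :: "(nat \<Rightarrow> 'w \<Rightarrow> real^'d) \<Rightarrow> (real^'d) set \<Rightarrow> 'w \<Rightarrow> nat" where
  "npts y A \<omega> = card {\<gamma>. y \<gamma> \<omega> \<in> A}"

text \<open>(y_gamma) is a Poisson point process on R^d of unit homogeneous density under M: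
  counts in bounded Borel sets are (a.s. finite and) Poisson with mean the Lebesgue
  measure of the set, and counts in pairwise disjoint bounded Borel sets are independent.\<close>
definition poisson_pp :: "'w measure \<Rightarrow> (nat \<Rightarrow> 'w \<Rightarrow> real^'d) \<Rightarrow> bool" where
  "poisson_pp M y \<longleftrightarrow>
     (\<forall>\<gamma>. y \<gamma> \<in> borel_measurable M) \<and>
     (\<forall>A k. A \<in> sets borel \<and> bounded A \<longrightarrow>
        measure M {\<omega> \<in> space M. finite {\<gamma>. y \<gamma> \<omega> \<in> A} \<and> npts y A \<omega> = k}
          = (measure lborel A) ^ k / fact k * exp (- measure lborel A)) \<and>
     (\<forall>(n::nat) A. (\<forall>i<n. A i \<in> sets borel \<and> bounded (A i)) \<and> disjoint_family_on A {..<n} \<longrightarrow>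
        prob_space.indep_vars M (\<lambda>_. count_space UNIV) (\<lambda>i. npts y (A i)) {..<n})"

end

theory Submission
  imports Defs
begin


definition tmax :: "real^'d \<Rightarrow> real" where
  "tmax y = Max (range (\<lambda>i. \<bar>y $ i\<bar>))"

lemma tmax_ge: "\<bar>y $ i\<bar> \<le> tmax y"
  unfolding tmax_def by (rule Max_ge) auto

lemma tmax_ex: "\<exists>i. tmax y = \<bar>y $ i\<bar>"
proof -
  have "Max (range (\<lambda>i. \<bar>y $ i\<bar>)) \<in> range (\<lambda>i. \<bar>y $ i\<bar>)"
    by (rule Max_in) auto
  then show ?thesis unfolding tmax_def by (metis (no_types, lifting) image_iff)
qed

lemma rep_unique:
  fixes L :: real
  assumes "0 < L" "x \<in> cube L" "x' \<in> cube L"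
    and "\<forall>i. \<exists>k::int. x $ i - w $ i = L * of_int k"
    and "\<forall>i. \<exists>k::int. x' $ i - w $ i = L * of_int k"
  shows "x = x'"
proof (rule vec_eq_iff[THEN iffD2], rule allI)
  fix i
  obtain k where k: "x $ i - w $ i = L * of_int k" using assms(4) by blast
  obtain k' where k': "x' $ i - w $ i = L * of_int k'" using assms(5) by blast
  have b: "- L / 2 \<le> x $ i" "x $ i < L / 2" "- L / 2 \<le> x' $ i" "x' $ i < L / 2"
    using assms(2,3) unfolding cube_def by auto
  have "L * of_int (k - k') = x $ i - x' $ i" using k k' by (simp add: algebra_simps)
  then have "\<bar>L * of_int (k - k')\<bar> < L * 1" using b by auto
  then have "\<bar>of_int (k - k')::real\<bar> < 1" using assms(1) by (simp add: abs_mult)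
  then have "k = k'" by linarith
  then show "x $ i = x' $ i" using k k' by simp
qed

lemma rep_exists:
  fixes L :: real
  assumes "0 < L"
  shows "\<exists>x. x \<in> cube L \<and> (\<forall>i. \<exists>k::int. x $ i - w $ i = L * of_int k)"
proof -
  define x where "x = (\<chi> i. w $ i - L * of_int \<lfloor>(w $ i + L / 2) / L\<rfloor>)"
  have "x \<in> cube L"
    unfolding cube_def
  proof (safe)
    fix i
    let ?q = "(w $ i + L / 2) / L"
    have f1: "of_int \<lfloor>?q\<rfloor> \<le> ?q" "?q < of_int \<lfloor>?q\<rfloor> + 1" by linarith+
    have "L * of_int \<lfloor>?q\<rfloor> \<le> L * ?q" using f1(1) assms by (intro mult_left_mono) auto
    also have "L * ?q = w $ i + L / 2" using assms by simp
    finally have A: "L * of_int \<lfloor>?q\<rfloor> \<le> w $ i + L / 2" .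
    have "w $ i + L / 2 = L * ?q" using assms by simp
    also have "L * ?q < L * (of_int \<lfloor>?q\<rfloor> + 1)" using f1(2) assms by (intro mult_strict_left_mono) auto
    finally have B: "w $ i + L / 2 < L * of_int \<lfloor>?q\<rfloor> + L" by (simp add: algebra_simps)
    show "- L / 2 \<le> x $ i" "x $ i < L / 2" unfolding x_def using A B by auto
  qed
  moreover have "\<forall>i. \<exists>k::int. x $ i - w $ i = L * of_int k"
    unfolding x_def by (auto intro!: exI[of _ "- \<lfloor>(w $ _ + L / 2) / L\<rfloor>"])
  ultimately show ?thesis by blast
qed

lemma per_ext_rep:
  fixes L :: real
  assumes "0 < L"
  shows "\<exists>x. x \<in> cube L \<and> (\<forall>i. \<exists>k::int. x $ i - w $ i = L * of_int k) \<and> per_ext L h w = h x"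
proof -
  obtain x where x: "x \<in> cube L \<and> (\<forall>i. \<exists>k::int. x $ i - w $ i = L * of_int k)"
    using rep_exists[OF assms] by blast
  have "(THE x. x \<in> cube L \<and> (\<forall>i. \<exists>k::int. x $ i - w $ i = L * of_int k)) = x"
    using rep_unique[OF assms] x by (intro the_equality) blast+
  then show ?thesis using x unfolding per_ext_def by auto
qed

lemma per_ext_in:
  fixes L :: real
  assumes "0 < L" "w \<in> cube L"
  shows "per_ext L h w = h w"
proof -
  obtain x where x: "x \<in> cube L" "\<forall>i. \<exists>k::int. x $ i - w $ i = L * of_int k" "per_ext L h w = h x"
    using per_ext_rep[OF assms(1)] by blast
  have "x = w" apply (rule rep_unique[OF assms(1) x(1) assms(2) x(2)]) by (auto intro: exI[of _ 0])
  then show ?thesis using x by simp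
qed

lemma cube_mono: "0 \<le> L \<Longrightarrow> L \<le> L' \<Longrightarrow> cube L \<subseteq> cube L'"
  unfolding cube_def by (auto simp: subset_iff) (smt (verit) divide_right_mono)+

lemma rep_coord_bound:
  fixes L a :: real
  assumes "0 < L" "y \<in> cube L" "\<bar>x $ i\<bar> \<le> a"
    and "z \<in> cube L" "\<exists>k::int. z $ i - (x - y) $ i = L * of_int k"
  shows "\<bar>y $ i\<bar> - a \<le> \<bar>z $ i\<bar>"
proof -
  obtain k where k: "z $ i - (x $ i - y $ i) = L * of_int k" using assms(5) by auto
  have "- L / 2 \<le> y $ i \<and> y $ i < L / 2" using assms(2) unfolding cube_def by blast
  then have yb: "\<bar>y $ i\<bar> \<le> L / 2" by linarith
  show ?thesis
  proof (cases "k = 0")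
    case True then show ?thesis using k assms(3) by auto
  next
    case False
    then have "1 \<le> \<bar>of_int k::real\<bar>" by linarith
    then have "L \<le> \<bar>L * of_int k\<bar>" using assms(1) by (simp add: abs_mult)
    then show ?thesis using k assms(3) yb by linarith
  qed
qed

lemma jbr_ge_coord: "\<bar>z $ i\<bar> \<le> jbr z"
proof -
  have "\<bar>z $ i\<bar> \<le> norm z" by (rule component_le_norm_cart)
  also have "norm z = sqrt ((norm z)\<^sup>2)" by simp
  also have "\<dots> \<le> jbr z" unfolding jbr_def by (intro real_sqrt_le_mono) simp
  finally show ?thesis .
qed

lemma per_ext_bound:
  fixes B :: "real^'d \<Rightarrow> real" and L a e CB :: real
  assumes Bb: "\<And>x. \<bar>B x\<bar> \<le> CB * jbr x powr (- e)" and "e > 0"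
    and "0 < L" "y \<in> cube L" "\<And>i. \<bar>x $ i\<bar> \<le> a" "tmax y - a > 0"
  shows "\<bar>per_ext L B (x - y)\<bar> \<le> CB * (tmax y - a) powr (- e)"
proof -
  obtain z where z: "z \<in> cube L" "\<forall>i. \<exists>k::int. z $ i - (x - y) $ i = L * of_int k"
      "per_ext L B (x - y) = B z"
    using per_ext_rep[OF assms(3)] by blast
  obtain j where j: "tmax y = \<bar>y $ j\<bar>" using tmax_ex by blast
  have "tmax y - a \<le> \<bar>z $ j\<bar>" unfolding j
    by (rule rep_coord_bound[OF assms(3,4) assms(5) z(1)]) (use z(2) in blast)
  also have "\<dots> \<le> jbr z" by (rule jbr_ge_coord)
  finally have h: "tmax y - a \<le> jbr z" .
  have CB: "0 \<le> CB"
  proof -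
    have "0 \<le> CB * jbr (0::real^'d) powr (- e)" using Bb[of 0] abs_ge_zero[of "B 0"] by linarith
    moreover have "jbr (0::real^'d) powr (- e) > 0" unfolding jbr_def by simp
    ultimately show ?thesis by (simp add: zero_le_mult_iff)
  qed
  have "jbr z powr (- e) \<le> (tmax y - a) powr (- e)"
    by (rule powr_mono2') (use assms(2,6) h in auto)
  then have "CB * jbr z powr (- e) \<le> CB * (tmax y - a) powr (- e)"
    using CB by (simp add: mult_left_mono)
  then show ?thesis using Bb[of z] z(3) by linarith
qed

definition Hf :: "real \<Rightarrow> real^'d \<Rightarrow> real" where
  "Hf p y = (if 1 \<le> tmax y then tmax y powr (- p) else 0)"

lemma Hf_nonneg: "0 \<le> Hf p y" unfolding Hf_def by auto

lemma far_bound: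
  fixes B :: "real^'d \<Rightarrow> real" and L L' CB p \<epsilon> :: real
  assumes Bb: "\<And>x. \<bar>B x\<bar> \<le> CB * jbr x powr (- (p + \<epsilon>))" and "\<epsilon> > 0" and "p > 0"
    and "8 / 3 \<le> L" "L \<le> L'" "y \<in> cube L'" "\<And>i. \<bar>x $ i\<bar> \<le> L / 8" "3 * L / 8 \<le> tmax y"
  shows "\<bar>per_ext L' B (x - y)\<bar> \<le> (CB * 2 powr (p + \<epsilon>) * (3 / 8) powr (- \<epsilon>)) * L powr (- \<epsilon>) * Hf p y"
proof -
  let ?t = "tmax y" let ?e = "p + \<epsilon>"
  have CB: "0 \<le> CB"
  proof -
    have "0 \<le> CB * jbr (0::real^'d) powr (- ?e)" using Bb[of 0] abs_ge_zero[of "B 0"] by linarith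
    moreover have "jbr (0::real^'d) powr (- ?e) > 0" unfolding jbr_def by simp
    ultimately show ?thesis by (simp add: zero_le_mult_iff)
  qed
  have t1: "1 \<le> ?t" using assms(4,8) by linarith
  have A: "\<bar>per_ext L' B (x - y)\<bar> \<le> CB * (?t - L / 8) powr (- ?e)"
    by (rule per_ext_bound[OF Bb]) (use assms in auto)
  have B: "(?t - L / 8) powr (- ?e) \<le> (?t / 2) powr (- ?e)"
    by (rule powr_mono2') (use assms t1 in auto)
  have C: "(?t / 2) powr (- ?e) = 2 powr ?e * (Hf p y * ?t powr (- \<epsilon>))"
    using t1 unfolding Hf_def by (simp add: powr_divide powr_minus powr_add[symmetric] divide_simps)
  have D1: "?t powr (- \<epsilon>) \<le> (3 / 8 * L) powr (- \<epsilon>)"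
    by (rule powr_mono2') (use assms t1 in auto)
  have D: "?t powr (- \<epsilon>) \<le> (3 / 8) powr (- \<epsilon>) * L powr (- \<epsilon>)"
    using D1 powr_mult[of "3/8" L "- \<epsilon>"] by simp
  have E: "(?t / 2) powr (- ?e) \<le> 2 powr ?e * (Hf p y * ((3 / 8) powr (- \<epsilon>) * L powr (- \<epsilon>)))"
    unfolding C using D Hf_nonneg[of p y] by (intro mult_left_mono) auto
  have "\<bar>per_ext L' B (x - y)\<bar> \<le> CB * (2 powr ?e * (Hf p y * ((3 / 8) powr (- \<epsilon>) * L powr (- \<epsilon>))))"
    using A B E CB by (meson mult_left_mono order_trans)
  then show ?thesis by (simp add: mult_ac)
qed

lemma CB_nonneg:
  fixes B :: "real^'d \<Rightarrow> real"
  assumes Bb: "\<And>x. \<bar>B x\<bar> \<le> CB * jbr x powr (- e)"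
  shows "0 \<le> CB"
proof -
  have "0 \<le> CB * jbr (0::real^'d) powr (- e)" using Bb[of 0] abs_ge_zero[of "B 0"] by linarith
  moreover have "jbr (0::real^'d) powr (- e) > 0" unfolding jbr_def by simp
  ultimately show ?thesis by (simp add: zero_le_mult_iff)
qed

lemma term_bound:
  fixes B :: "real^'d \<Rightarrow> real" and L L' CB p \<epsilon> :: real
  assumes Bb: "\<And>x. \<bar>B x\<bar> \<le> CB * jbr x powr (- (p + \<epsilon>))" and "\<epsilon> > 0" and "p > 0"
    and "8 / 3 \<le> L" "L \<le> L'" "y \<in> cube L'" "\<And>i. \<bar>x $ i\<bar> \<le> L / 8"
  shows "\<bar>(if y \<in> cube L then per_ext L B (x - y) else 0) - per_ext L' B (x - y)\<bar>
     \<le> 2 * (CB * 2 powr (p + \<epsilon>) * (3 / 8) powr (- \<epsilon>)) * L powr (- \<epsilon>) * Hf p y"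
proof -
  let ?K = "CB * 2 powr (p + \<epsilon>) * (3 / 8) powr (- \<epsilon>)"
  have CB: "0 \<le> CB" by (rule CB_nonneg[OF Bb])
  have K0: "0 \<le> ?K * L powr (- \<epsilon>) * Hf p y" using CB Hf_nonneg[of p y] by simp
  have L0: "0 < L" using assms(4) by linarith
  show ?thesis
  proof (cases "y \<in> cube L \<and> x - y \<in> cube L")
    case True
    have "x - y \<in> cube L'" using True cube_mono[of L L'] L0 assms(5) by auto
    then have "per_ext L' B (x - y) = B (x - y)" using L0 assms(5) by (intro per_ext_in) auto
    moreover have "per_ext L B (x - y) = B (x - y)" using True L0 by (intro per_ext_in) auto
    ultimately show ?thesis using True K0 by (simp add: mult_ac)
  next
    case False
    have t: "3 * L / 8 \<le> tmax y"
    proof (cases "y \<in> cube L")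
      case False
      then obtain i where "\<not> (- L / 2 \<le> y $ i \<and> y $ i < L / 2)" unfolding cube_def by auto
      then have "L / 2 \<le> \<bar>y $ i\<bar>" by linarith
      then show ?thesis using tmax_ge[of y i] L0 by linarith
    next
      case True
      then have "x - y \<notin> cube L" using \<open>\<not> (y \<in> cube L \<and> x - y \<in> cube L)\<close> by blast
      then obtain i where "\<not> (- L / 2 \<le> x $ i - y $ i \<and> x $ i - y $ i < L / 2)" unfolding cube_def by auto
      then have "L / 2 \<le> \<bar>x $ i - y $ i\<bar>" by linarith
      then show ?thesis using tmax_ge[of y i] assms(7)[of i] by linarith
    qed
    have b1: "\<bar>per_ext L' B (x - y)\<bar> \<le> ?K * L powr (- \<epsilon>) * Hf p y"
      by (rule far_bound[OF Bb]) (use assms t in auto)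
    have b2: "\<bar>(if y \<in> cube L then per_ext L B (x - y) else 0)\<bar> \<le> ?K * L powr (- \<epsilon>) * Hf p y"
    proof (cases "y \<in> cube L")
      case True
      have "\<bar>per_ext L B (x - y)\<bar> \<le> ?K * L powr (- \<epsilon>) * Hf p y"
        by (rule far_bound[OF Bb]) (use assms t True in auto)
      then show ?thesis using True by simp
    qed (use K0 in simp)
    show ?thesis using b1 b2 by linarith
  qed
qed

lemma det_bound:
  fixes B :: "real^'d \<Rightarrow> real" and L L' CB p \<epsilon> :: real
    and y :: "nat \<Rightarrow> 'w \<Rightarrow> real^'d" and v :: "nat \<Rightarrow> 'w \<Rightarrow> real"
  assumes Bb: "\<And>x. \<bar>B x\<bar> \<le> CB * jbr x powr (- (p + \<epsilon>))" and "\<epsilon> > 0" and "p > 0"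
    and "8 / 3 \<le> L" "L \<le> L'" "\<And>i. \<bar>x $ i\<bar> \<le> L / 8"
    and fin: "finite {\<gamma>. y \<gamma> \<omega> \<in> cube L'}"
  shows "\<bar>potential L y v B \<omega> x - potential L' y v B \<omega> x\<bar>
     \<le> 2 * (CB * 2 powr (p + \<epsilon>) * (3 / 8) powr (- \<epsilon>)) * L powr (- \<epsilon>) *
        (\<Sum>\<gamma>\<in>{\<gamma>. y \<gamma> \<omega> \<in> cube L'}. \<bar>v \<gamma> \<omega>\<bar> * Hf p (y \<gamma> \<omega>))"
proof -
  let ?K = "2 * (CB * 2 powr (p + \<epsilon>) * (3 / 8) powr (- \<epsilon>)) * L powr (- \<epsilon>)"
  let ?S' = "{\<gamma>. y \<gamma> \<omega> \<in> cube L'}"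
  have L0: "0 < L" using assms(4) by linarith
  have sub: "{\<gamma>. y \<gamma> \<omega> \<in> cube L} = ?S' \<inter> {\<gamma>. y \<gamma> \<omega> \<in> cube L}"
    using cube_mono[of L L'] L0 assms(5) by auto
  have "potential L y v B \<omega> x =
      (\<Sum>\<gamma>\<in>?S'. if \<gamma> \<in> {\<gamma>. y \<gamma> \<omega> \<in> cube L} then v \<gamma> \<omega> * per_ext L B (x - y \<gamma> \<omega>) else 0)"
    unfolding potential_def by (subst sub, rule sum.inter_restrict[OF fin])
  then have "potential L y v B \<omega> x - potential L' y v B \<omega> x =
      (\<Sum>\<gamma>\<in>?S'. v \<gamma> \<omega> * ((if y \<gamma> \<omega> \<in> cube L then per_ext L B (x - y \<gamma> \<omega>) else 0)
          - per_ext L' B (x - y \<gamma> \<omega>)))"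
    unfolding potential_def by (simp add: sum_subtractf[symmetric] right_diff_distrib) (rule sum.cong, auto)
  also have "\<bar>\<dots>\<bar> \<le> (\<Sum>\<gamma>\<in>?S'. \<bar>v \<gamma> \<omega> * ((if y \<gamma> \<omega> \<in> cube L then per_ext L B (x - y \<gamma> \<omega>) else 0)
          - per_ext L' B (x - y \<gamma> \<omega>))\<bar>)"
    by (rule sum_abs)
  also have "\<dots> \<le> (\<Sum>\<gamma>\<in>?S'. ?K * (\<bar>v \<gamma> \<omega>\<bar> * Hf p (y \<gamma> \<omega>)))"
  proof (rule sum_mono)
    fix \<gamma> assume g: "\<gamma> \<in> ?S'"
    have "\<bar>(if y \<gamma> \<omega> \<in> cube L then per_ext L B (x - y \<gamma> \<omega>) else 0) - per_ext L' B (x - y \<gamma> \<omega>)\<bar>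
        \<le> ?K * Hf p (y \<gamma> \<omega>)"
      by (rule term_bound[OF Bb]) (use assms g in auto)
    then have "\<bar>v \<gamma> \<omega>\<bar> * \<bar>(if y \<gamma> \<omega> \<in> cube L then per_ext L B (x - y \<gamma> \<omega>) else 0) - per_ext L' B (x - y \<gamma> \<omega>)\<bar>
        \<le> \<bar>v \<gamma> \<omega>\<bar> * (?K * Hf p (y \<gamma> \<omega>))"
      by (rule mult_left_mono) simp
    then show "\<bar>v \<gamma> \<omega> * ((if y \<gamma> \<omega> \<in> cube L then per_ext L B (x - y \<gamma> \<omega>) else 0)
          - per_ext L' B (x - y \<gamma> \<omega>))\<bar> \<le> ?K * (\<bar>v \<gamma> \<omega>\<bar> * Hf p (y \<gamma> \<omega>))"
      by (simp add: abs_mult mult_ac)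
  qed
  also have "\<dots> = ?K * (\<Sum>\<gamma>\<in>?S'. \<bar>v \<gamma> \<omega>\<bar> * Hf p (y \<gamma> \<omega>))"
    by (rule sum_distrib_left[symmetric])
  finally show ?thesis .
qed



lemma poisson_series: "(\<lambda>n. real n * ((lam::real) ^ n / fact n * exp (- lam))) sums lam"
proof -
  have e: "(\<lambda>n. lam ^ n / fact n) sums exp lam"
    using exp_converges[of lam] by (simp add: divide_inverse real_scaleR_def mult.commute)
  have "(\<lambda>n. lam * (lam ^ n / fact n) * exp (- lam)) sums (lam * exp lam * exp (- lam))"
    by (intro sums_mult2 sums_mult e)
  moreover have "lam * exp lam * exp (- lam) = lam" by (simp add: exp_minus)
  moreover have "\<And>n. lam * (lam ^ n / fact n) * exp (- lam)
      = real (Suc n) * (lam ^ Suc n / fact (Suc n) * exp (- lam))"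
  proof -
    fix n
    have f: "fact (Suc n) = real (Suc n) * (fact n :: real)" by (rule fact_Suc)
    have "fact n > (0::real)" by simp
    then show "lam * (lam ^ n / fact n) * exp (- lam)
      = real (Suc n) * (lam ^ Suc n / fact (Suc n) * exp (- lam))"
      unfolding f by (simp add: field_simps del: of_nat_Suc)
  qed
  ultimately have "(\<lambda>n. real (Suc n) * (lam ^ Suc n / fact (Suc n) * exp (- lam))) sums lam" by simp
  then show ?thesis by (subst (asm) sums_Suc_iff) simp
qed

lemma poisson_total: "(\<lambda>n. (lam::real) ^ n / fact n * exp (- lam)) sums 1"
proof -
  have e: "(\<lambda>n. lam ^ n / fact n) sums exp lam"
    using exp_converges[of lam] by (simp add: divide_inverse real_scaleR_def mult.commute)
  have "(\<lambda>n. lam ^ n / fact n * exp (- lam)) sums (exp lam * exp (- lam))"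
    by (intro sums_mult2 e)
  then show ?thesis by (simp add: exp_minus)
qed

lemma suminf_indicator_card:
  assumes "finite {\<gamma>::nat. P \<gamma>}"
  shows "(\<Sum>\<gamma>. ennreal (if P \<gamma> then 1 else 0)) = of_nat (card {\<gamma>. P \<gamma>})"
proof -
  have "(\<Sum>\<gamma>. ennreal (if P \<gamma> then 1 else 0)) = (\<Sum>\<gamma>\<in>{\<gamma>. P \<gamma>}. ennreal (if P \<gamma> then 1 else 0))"
    by (rule suminf_finite[OF assms]) auto
  also have "\<dots> = of_nat (card {\<gamma>. P \<gamma>})" by simp
  finally show ?thesis .
qed

lemma poisson_count:
  fixes M :: "'w measure" and y :: "nat \<Rightarrow> 'w \<Rightarrow> real^'d"
  assumes "prob_space M" "poisson_pp M y"
    and A: "A \<in> sets borel" "bounded A" "0 < measure lborel A"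
  shows "AE \<omega> in M. finite {\<gamma>. y \<gamma> \<omega> \<in> A}"
    and "(\<integral>\<^sup>+\<omega>. (\<Sum>\<gamma>. ennreal (indicator A (y \<gamma> \<omega>))) \<partial>M) = ennreal (measure lborel A)"
proof -
  interpret prob_space M by fact
  define lam where "lam = measure lborel A"
  define E where "E n = {\<omega> \<in> space M. finite {\<gamma>. y \<gamma> \<omega> \<in> A} \<and> npts y A \<omega> = n}" for n
  have PE: "prob (E n) = lam ^ n / fact n * exp (- lam)" for n
    using assms(2) A unfolding poisson_pp_def E_def lam_def by blast
  have Epos: "prob (E n) > 0" for n unfolding PE using A(3) lam_def by simp
  have Emeas: "E n \<in> sets M" for n
    using Epos[of n] measure_notin_sets[of "E n" M] by force
  have disj: "disjoint_family E" unfolding disjoint_family_on_def E_def by auto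
  have "(\<lambda>n. prob (E n)) sums prob (\<Union>n. E n)"
    by (rule measure_UNION) (use Emeas disj in auto)
  then have "prob (\<Union>n. E n) = 1"
    using poisson_total[of lam] unfolding PE[symmetric] by (simp add: sums_unique2)
  then have AEU: "AE \<omega> in M. \<omega> \<in> (\<Union>n. E n)"
    using Emeas by (subst AE_in_set_eq_1) auto
  show "AE \<omega> in M. finite {\<gamma>. y \<gamma> \<omega> \<in> A}"
    using AEU by eventually_elim (auto simp: E_def)
  have "AE \<omega> in M. (\<Sum>\<gamma>. ennreal (indicator A (y \<gamma> \<omega>))) = (\<Sum>n. of_nat n * indicator (E n) \<omega>)"
    using AEU
  proof eventually_elim
    fix \<omega> assume "\<omega> \<in> (\<Union>n. E n)"
    then obtain m where m: "\<omega> \<in> E m" by blast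
    then have fin: "finite {\<gamma>. y \<gamma> \<omega> \<in> A}" and c: "npts y A \<omega> = m" unfolding E_def by auto
    have "(\<Sum>\<gamma>. ennreal (indicator A (y \<gamma> \<omega>))) = of_nat (card {\<gamma>. y \<gamma> \<omega> \<in> A})"
      using suminf_indicator_card[OF fin] by (simp add: indicator_def of_bool_def)
    also have "\<dots> = of_nat m" using c unfolding npts_def by simp
    also have "\<dots> = (\<Sum>n. of_nat n * indicator (E n) \<omega>)"
    proof -
      have "(\<Sum>n. (of_nat n * indicator (E n) \<omega> :: ennreal)) = (\<Sum>n\<in>{m}. of_nat n * indicator (E n) \<omega>)"
        by (rule suminf_finite) (use m disj in \<open>auto simp: disjoint_family_on_def indicator_def\<close>)
      then show ?thesis using m by simp
    qed
    finally show "(\<Sum>\<gamma>. ennreal (indicator A (y \<gamma> \<omega>))) = (\<Sum>n. of_nat n * indicator (E n) \<omega>)" .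
  qed
  then have "(\<integral>\<^sup>+\<omega>. (\<Sum>\<gamma>. ennreal (indicator A (y \<gamma> \<omega>))) \<partial>M) = (\<integral>\<^sup>+\<omega>. (\<Sum>n. of_nat n * indicator (E n) \<omega>) \<partial>M)"
    by (rule nn_integral_cong_AE)
  also have "\<dots> = (\<Sum>n. \<integral>\<^sup>+\<omega>. of_nat n * indicator (E n) \<omega> \<partial>M)"
    by (rule nn_integral_suminf) (use Emeas in auto)
  also have "\<dots> = (\<Sum>n. ennreal (real n * (lam ^ n / fact n * exp (- lam))))"
    using Emeas by (simp add: nn_integral_cmult_indicator emeasure_eq_measure PE ennreal_of_nat_eq_real_of_nat ennreal_mult'[symmetric])
  also have "\<dots> = ennreal lam"
    using poisson_series[of lam] lam_def by (subst suminf_ennreal2) (auto simp: sums_iff)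
  finally show "(\<integral>\<^sup>+\<omega>. (\<Sum>\<gamma>. ennreal (indicator A (y \<gamma> \<omega>))) \<partial>M) = ennreal (measure lborel A)"
    unfolding lam_def .
qed



lemma cube_borel: "cube c \<in> sets (borel :: (real^'d) measure)"
proof -
  have "cube c = (\<Inter>i\<in>UNIV. {x::real^'d. - c / 2 \<le> x $ i} \<inter> {x. x $ i < c / 2})"
    unfolding cube_def by auto
  also have "\<dots> \<in> sets borel"
  proof (rule sets.finite_INT)
    fix i :: 'd
    have "closed {x::real^'d. - c / 2 \<le> x $ i}" by (intro closed_Collect_le continuous_intros)
    moreover have "open {x::real^'d. x $ i < c / 2}" by (intro open_Collect_less continuous_intros)
    ultimately show "{x::real^'d. - c / 2 \<le> x $ i} \<inter> {x. x $ i < c / 2} \<in> sets borel"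
      by (intro sets.Int borel_closed borel_open)
  qed auto
  finally show ?thesis .
qed

lemma cube_sub_cbox: "cube c \<subseteq> cbox (\<chi> i. - c / 2) (\<chi> i. c / 2)"
proof
  fix x assume x: "x \<in> cube c"
  show "x \<in> cbox (\<chi> i. - c / 2) (\<chi> i. c / 2)" unfolding mem_box_cart
  proof
    fix i
    from x have "- c / 2 \<le> x $ i \<and> x $ i < c / 2" unfolding cube_def by auto
    then show "(\<chi> i. - c / 2) $ i \<le> x $ i \<and> x $ i \<le> (\<chi> i. c / 2) $ i" by simp
  qed
qed

lemma cbox_sub_cube: "0 < c \<Longrightarrow> cbox (\<chi> i. - c / 4) (\<chi> i. c / 4) \<subseteq> cube c"
proof
  fix x assume c: "0 < c" and x: "x \<in> cbox (\<chi> i. - c / 4) (\<chi> i. c / 4)"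
  show "x \<in> cube c" unfolding cube_def
  proof (safe)
    fix i
    from x have "(\<chi> i. - c / 4) $ i \<le> x $ i \<and> x $ i \<le> (\<chi> i. c / 4) $ i" unfolding mem_box_cart by blast
    then show "- c / 2 \<le> x $ i" "x $ i < c / 2" using c by auto
  qed
qed

lemma measure_cbox_sym: "0 \<le> c \<Longrightarrow> measure lborel (cbox ((\<chi> i. - c)::real^'d) (\<chi> i. c)) = (2 * c) ^ CARD('d)"
proof -
  assume c: "0 \<le> c"
  have "cbox ((\<chi> i. - c)::real^'d) (\<chi> i. c) \<noteq> {}" 
  proof -
    have "(0::real^'d) \<in> cbox (\<chi> i. - c) (\<chi> i. c)" using c by (simp add: mem_box_cart)
    then show ?thesis by blast
  qed
  then show ?thesis using content_cbox_cart[of "(\<chi> i. - c)::real^'d" "(\<chi> i. c)"] by simp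
qed

lemma cube_facts:
  assumes "0 < c"
  shows "bounded (cube c :: (real^'d) set)" "0 < measure lborel (cube c :: (real^'d) set)"
    "measure lborel (cube c :: (real^'d) set) \<le> c ^ CARD('d)"
proof -
  show "bounded (cube c :: (real^'d) set)" by (rule bounded_subset[OF bounded_cbox cube_sub_cbox])
  have fm: "cbox ((\<chi> i. - c / 2)::real^'d) (\<chi> i. c / 2) \<in> fmeasurable lborel"
    by (simp add: fmeasurable_cbox)
  have "measure lborel (cube c :: (real^'d) set) \<le> measure lborel (cbox ((\<chi> i. - c / 2)::real^'d) (\<chi> i. c / 2))"
    by (rule measure_mono_fmeasurable[OF cube_sub_cbox _ fm]) (use cube_borel in simp)
  also have "\<dots> = c ^ CARD('d)" using measure_cbox_sym[of "c/2", where 'd='d] assms by simp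
  finally show "measure lborel (cube c :: (real^'d) set) \<le> c ^ CARD('d)" .
  have fm2: "cube c \<in> fmeasurable (lborel :: (real^'d) measure)"
    by (rule fmeasurableI2[OF fm cube_sub_cbox]) (use cube_borel in simp)
  have "0 < (c / 2) ^ CARD('d)" using assms by simp
  also have "(c / 2) ^ CARD('d) = measure lborel (cbox ((\<chi> i. - c / 4)::real^'d) (\<chi> i. c / 4))"
    using measure_cbox_sym[of "c/4", where 'd='d] assms by simp
  also have "\<dots> \<le> measure lborel (cube c :: (real^'d) set)"
    by (rule measure_mono_fmeasurable[OF cbox_sub_cube[OF assms] _ fm2]) simp
  finally show "0 < measure lborel (cube c :: (real^'d) set)" .
qed



lemma indep_term:
  fixes M :: "'w measure" and y :: "nat \<Rightarrow> 'w \<Rightarrow> real^'d" and v :: "nat \<Rightarrow> 'w \<Rightarrow> real"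
  assumes P: "prob_space M"
    and ym: "y \<gamma> \<in> borel_measurable M"
    and vm: "\<And>\<gamma>. v \<gamma> \<in> borel_measurable M"
    and dist: "\<And>\<gamma>. distr M borel (v \<gamma>) = distr M borel (v 0)"
    and int0: "integrable M (v 0)"
    and ind: "prob_space.indep_set M
           (sigma_sets (space M) {v \<gamma> -` A \<inter> space M | \<gamma> A. A \<in> sets borel})
           (sigma_sets (space M) {y \<gamma> -` A \<inter> space M | \<gamma> A. A \<in> sets borel})"
    and C: "C \<in> sets borel"
  shows "(\<integral>\<^sup>+\<omega>. ennreal (\<bar>v \<gamma> \<omega>\<bar> * indicator C (y \<gamma> \<omega>)) \<partial>M)
       = ennreal (\<integral>\<omega>. \<bar>v 0 \<omega>\<bar> \<partial>M) * (\<integral>\<^sup>+\<omega>. indicator C (y \<gamma> \<omega>) \<partial>M)"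
proof -
  interpret prob_space M by fact
  define X1 where "X1 = (\<lambda>\<omega>. \<bar>v \<gamma> \<omega>\<bar>)"
  define X2 where "X2 = (\<lambda>\<omega>. indicator C (y \<gamma> \<omega>) :: real)"
  have am0: "(\<lambda>x::real. \<bar>x\<bar>) \<in> borel_measurable borel" by measurable
  have im0: "(indicator C :: real^'d \<Rightarrow> real) \<in> borel_measurable borel" using C by measurable
  have X1m: "X1 \<in> borel_measurable M" unfolding X1_def by (rule measurable_compose[OF vm[of \<gamma>] am0])
  have X2m: "X2 \<in> borel_measurable M" unfolding X2_def by (rule measurable_compose[OF ym im0])
  let ?V = "sigma_sets (space M) {v \<gamma> -` A \<inter> space M | \<gamma> A. A \<in> sets borel}"
  let ?Y = "sigma_sets (space M) {y \<gamma> -` A \<inter> space M | \<gamma> A. A \<in> sets borel}"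
  have big: "?V \<subseteq> events" "?Y \<subseteq> events" "\<forall>a\<in>?V. \<forall>b\<in>?Y. prob (a \<inter> b) = prob a * prob b"
    using ind[unfolded indep_sets2_eq] by blast+
  have s1: "sigma_sets (space M) {X1 -` A \<inter> space M | A. A \<in> sets borel} \<subseteq> ?V"
  proof (rule sigma_sets_subseteq, safe)
    fix A :: "real set" assume A: "A \<in> sets borel"
    have "(\<lambda>x::real. \<bar>x\<bar>) -` A \<in> sets borel"
    proof -
      have am: "(\<lambda>x::real. \<bar>x\<bar>) \<in> borel_measurable borel" by measurable
      show ?thesis using measurable_sets[OF am A] by simp
    qed
    moreover have "X1 -` A \<inter> space M = v \<gamma> -` ((\<lambda>x::real. \<bar>x\<bar>) -` A) \<inter> space M"
      unfolding X1_def by auto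
    ultimately show "\<exists>\<gamma>' B. X1 -` A \<inter> space M = v \<gamma>' -` B \<inter> space M \<and> B \<in> sets borel" by blast
  qed
  have s2: "sigma_sets (space M) {X2 -` A \<inter> space M | A. A \<in> sets borel} \<subseteq> ?Y"
  proof (rule sigma_sets_subseteq, safe)
    fix A :: "real set" assume A: "A \<in> sets borel"
    have im: "(indicator C :: real^'d \<Rightarrow> real) \<in> borel_measurable borel" using C by measurable
    have "(indicator C :: real^'d \<Rightarrow> real) -` A \<in> sets borel"
      using measurable_sets[OF im A] by simp
    moreover have "X2 -` A \<inter> space M = y \<gamma> -` ((indicator C :: real^'d \<Rightarrow> real) -` A) \<inter> space M"
      unfolding X2_def by auto
    ultimately show "\<exists>\<gamma>' B. X2 -` A \<inter> space M = y \<gamma>' -` B \<inter> space M \<and> B \<in> sets borel" by blast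
  qed
  have iv: "indep_var borel X1 borel X2"
    unfolding indep_var_eq using X1m X2m s1 s2 big unfolding indep_sets2_eq
    by (simp add: measurable_def) blast
  have intg: "integrable M (v \<gamma>)"
  proof -
    have "integrable (distr M borel (v 0)) (\<lambda>x. x)"
      using int0 by (subst integrable_distr_eq) (use vm in auto)
    then have "integrable (distr M borel (v \<gamma>)) (\<lambda>x. x)" by (simp only: dist[of \<gamma>])
    then show ?thesis by (subst (asm) integrable_distr_eq) (use vm in auto)
  qed
  have i1: "integrable M X1" unfolding X1_def using intg by (rule integrable_abs)
  have i2: "integrable M X2"
  proof -
    have "integrable M (indicator (y \<gamma> -` C \<inter> space M) :: 'w \<Rightarrow> real)"
      by (rule integrable_real_indicator) (use measurable_sets[OF ym C] in \<open>auto simp: less_top[symmetric]\<close>)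
    moreover have "integrable M X2 = integrable M (indicator (y \<gamma> -` C \<inter> space M) :: 'w \<Rightarrow> real)"
      using Bochner_Integration.integrable_cong[of M M X2 "indicator (y \<gamma> -` C \<inter> space M) :: 'w \<Rightarrow> real"]
      by (auto simp: X2_def indicator_def)
    ultimately show ?thesis by simp
  qed
  have e1: "(\<integral>\<omega>. X1 \<omega> \<partial>M) = (\<integral>\<omega>. \<bar>v 0 \<omega>\<bar> \<partial>M)"
  proof -
    have "(\<integral>\<omega>. X1 \<omega> \<partial>M) = integral\<^sup>L (distr M borel (v \<gamma>)) abs"
      unfolding X1_def by (subst integral_distr) (use vm in auto)
    also have "\<dots> = integral\<^sup>L (distr M borel (v 0)) abs" by (simp only: dist[of \<gamma>])
    also have "\<dots> = (\<integral>\<omega>. \<bar>v 0 \<omega>\<bar> \<partial>M)" by (subst integral_distr) (use vm in auto)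
    finally show ?thesis .
  qed
  have "(\<integral>\<^sup>+\<omega>. ennreal (X1 \<omega> * X2 \<omega>) \<partial>M) = ennreal (\<integral>\<omega>. X1 \<omega> * X2 \<omega> \<partial>M)"
    by (rule nn_integral_eq_integral[OF indep_var_integrable[OF iv i1 i2]])
       (auto simp: X1_def X2_def)
  also have "\<dots> = ennreal ((\<integral>\<omega>. X1 \<omega> \<partial>M) * (\<integral>\<omega>. X2 \<omega> \<partial>M))"
    by (simp add: indep_var_lebesgue_integral[OF iv i1 i2])
  also have "\<dots> = ennreal (\<integral>\<omega>. X1 \<omega> \<partial>M) * ennreal (\<integral>\<omega>. X2 \<omega> \<partial>M)"
    by (rule ennreal_mult) (auto simp: X1_def X2_def)
  also have "ennreal (\<integral>\<omega>. X2 \<omega> \<partial>M) = (\<integral>\<^sup>+\<omega>. ennreal (X2 \<omega>) \<partial>M)"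
    by (rule nn_integral_eq_integral[OF i2, symmetric]) (auto simp: X2_def)
  finally show ?thesis unfolding e1 by (simp add: X1_def X2_def ennreal_indicator)
qed



lemma suminf_swap_ennreal:
  fixes f :: "nat \<Rightarrow> nat \<Rightarrow> ennreal"
  shows "(\<Sum>i. \<Sum>j. f i j) = (\<Sum>j. \<Sum>i. f i j)"
proof -
  have "(\<Sum>i. \<Sum>j. f i j) = (\<integral>\<^sup>+i. (\<Sum>j. f i j) \<partial>count_space UNIV)"
    by (rule nn_integral_count_space_nat[symmetric])
  also have "\<dots> = (\<Sum>j. \<integral>\<^sup>+i. f i j \<partial>count_space UNIV)"
    by (rule nn_integral_suminf) simp
  also have "\<dots> = (\<Sum>j. \<Sum>i. f i j)" by (simp add: nn_integral_count_space_nat)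
  finally show ?thesis .
qed

definition wk :: "nat \<Rightarrow> nat \<Rightarrow> real" where
  "wk d k = 2 ^ (d + 1) / (2 ^ k) ^ (d + 1)"

lemma wk_nonneg: "0 \<le> wk d k" unfolding wk_def by simp

lemma hf_bound:
  fixes y0 :: "real^'d"
  assumes "1 \<le> tmax y0"
  shows "\<exists>k. y0 \<in> cube (2 ^ (k + 1)) \<and> Hf (real CARD('d) + 1) y0 \<le> wk CARD('d) k"
proof -
  let ?t = "tmax y0" let ?d = "CARD('d)"
  have ex: "\<exists>k. ?t < 2 ^ k" using real_arch_pow[of 2 ?t] by auto
  define k where "k = (LEAST k. ?t < (2::real) ^ k)"
  have k1: "?t < 2 ^ k" unfolding k_def by (rule LeastI_ex[OF ex])
  have k2: "\<And>j. j < k \<Longrightarrow> 2 ^ j \<le> ?t" unfolding k_def using not_less_Least by force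
  have "k \<noteq> 0" using k1 assms by (intro notI) simp
  then obtain j where kj: "k = Suc j" by (cases k) auto
  have tj: "2 ^ j \<le> ?t" using k2 kj by simp
  have inC: "y0 \<in> cube (2 ^ (k + 1))"
    unfolding cube_def
  proof (safe)
    fix i
    have "\<bar>y0 $ i\<bar> < 2 ^ k" using tmax_ge[of y0 i] k1 by linarith
    then show "- (2 ^ (k + 1)) / 2 \<le> y0 $ i" "y0 $ i < 2 ^ (k + 1) / 2" by auto
  qed
  have t0: "0 < ?t" using assms by linarith
  have "Hf (real ?d + 1) y0 = inverse (?t ^ (?d + 1))"
  proof -
    have "real ?d + 1 = real (?d + 1)" by simp
    then have "?t powr (- (real ?d + 1)) = inverse (?t powr real (?d + 1))"
      by (simp only: powr_minus)
    also have "\<dots> = inverse (?t ^ (?d + 1))" using t0 by (simp only: powr_realpow)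
    finally show ?thesis unfolding Hf_def using assms by simp
  qed
  also have "\<dots> \<le> inverse ((2 ^ j) ^ (?d + 1))"
  proof (rule le_imp_inverse_le)
    show "(2 ^ j) ^ (?d + 1) \<le> ?t ^ (?d + 1)" by (rule power_mono[OF tj]) simp
  qed simp
  also have "\<dots> = wk ?d k" unfolding wk_def kj by (simp add: power_mult_distrib field_simps)
  finally show ?thesis using inC by blast
qed

definition Qf :: "(nat \<Rightarrow> 'w \<Rightarrow> real^'d) \<Rightarrow> (nat \<Rightarrow> 'w \<Rightarrow> real) \<Rightarrow> 'w \<Rightarrow> ennreal" where
  "Qf y v \<omega> = (\<Sum>\<gamma>. \<Sum>k. ennreal (wk CARD('d) k * (\<bar>v \<gamma> \<omega>\<bar> * indicator (cube (2 ^ (k + 1))) (y \<gamma> \<omega>))))"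

lemma wk_geom: "wk d k * (2 ^ (k + 1)) ^ d = 2 ^ (2 * d + 1) * (1 / 2) ^ k"
proof -
  have e1: "((2::real) ^ (k + 1)) ^ d = 2 ^ d * (2 ^ k) ^ d"
    by (metis power_mult_distrib power_Suc Suc_eq_plus1)
  have e2: "((2::real) ^ k) ^ (d + 1) = 2 ^ k * (2 ^ k) ^ d" by (rule power_Suc[unfolded Suc_eq_plus1])
  have e3: "(2::real) ^ (2 * d + 1) = 2 ^ (d + 1) * 2 ^ d"
    by (metis power_add mult_2 add.commute add.left_commute)
  have e4: "(1 / 2 :: real) ^ k = 1 / 2 ^ k" by (rule power_one_over)
  define q where "q = (2::real) ^ k"
  define r where "r = (2::real) ^ d"
  define s where "s = (2::real) ^ (d + 1)"
  define u where "u = q ^ d"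
  have p: "q > 0" "u > 0" unfolding q_def u_def by simp_all
  have "wk d k * (2 ^ (k + 1)) ^ d = s / (q * u) * (r * u)"
    unfolding wk_def e1 e2 q_def r_def s_def u_def ..
  also have "\<dots> = s * r / q" using p by (simp add: field_simps)
  also have "\<dots> = 2 ^ (2 * d + 1) * (1 / 2) ^ k" unfolding e3 e4 q_def r_def s_def by simp
  finally show ?thesis .
qed

lemma prob_part:
  fixes M :: "'w measure" and y :: "nat \<Rightarrow> 'w \<Rightarrow> real^'d" and v :: "nat \<Rightarrow> 'w \<Rightarrow> real"
  assumes P: "prob_space M" and pp: "poisson_pp M y"
    and vm: "\<And>\<gamma>. v \<gamma> \<in> borel_measurable M"
    and dist: "\<And>\<gamma>. distr M borel (v \<gamma>) = distr M borel (v 0)"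
    and int0: "integrable M (v 0)"
    and ind: "prob_space.indep_set M
           (sigma_sets (space M) {v \<gamma> -` A \<inter> space M | \<gamma> A. A \<in> sets borel})
           (sigma_sets (space M) {y \<gamma> -` A \<inter> space M | \<gamma> A. A \<in> sets borel})"
  shows "AE \<omega> in M. (\<forall>k. finite {\<gamma>. y \<gamma> \<omega> \<in> cube (2 ^ (k + 1))}) \<and> Qf y v \<omega> \<noteq> \<infinity>"
proof -
  interpret prob_space M by fact
  let ?d = "CARD('d)"
  let ?C = "\<lambda>k::nat. cube (2 ^ (k + 1)) :: (real^'d) set"
  have ym: "\<And>\<gamma>. y \<gamma> \<in> borel_measurable M" using pp unfolding poisson_pp_def by blast
  have Cb: "\<And>k. ?C k \<in> sets borel" by (rule cube_borel)
  have Cf: "bounded (?C k)" "0 < measure lborel (?C k)" "measure lborel (?C k) \<le> (2 ^ (k + 1)) ^ ?d" for k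
    using cube_facts[of "2 ^ (k + 1)", where 'd='d] by auto
  have AEfin: "AE \<omega> in M. \<forall>k. finite {\<gamma>. y \<gamma> \<omega> \<in> ?C k}"
    by (subst AE_all_countable) (use poisson_count(1)[OF P pp Cb Cf(1,2)] in blast)
  have cnt: "(\<integral>\<^sup>+\<omega>. (\<Sum>\<gamma>. indicator (?C k) (y \<gamma> \<omega>)) \<partial>M) = ennreal (measure lborel (?C k))" for k
    using poisson_count(2)[OF P pp Cb Cf(1,2), of k] by (simp add: ennreal_indicator)
  have tmr: "(\<lambda>\<omega>. wk ?d k * (\<bar>v \<gamma> \<omega>\<bar> * indicator (?C k) (y \<gamma> \<omega>))) \<in> borel_measurable M" for \<gamma> k
  proof -
    have "(\<lambda>\<omega>. indicator (?C k) (y \<gamma> \<omega>)::real) \<in> borel_measurable M"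
      by (rule measurable_compose[OF ym borel_measurable_indicator[OF Cb]])
    moreover have "(\<lambda>\<omega>. \<bar>v \<gamma> \<omega>\<bar>) \<in> borel_measurable M" by (rule borel_measurable_abs[OF vm])
    ultimately show ?thesis by (intro borel_measurable_times borel_measurable_const)
  qed
  have tm: "(\<lambda>\<omega>. ennreal (wk ?d k * (\<bar>v \<gamma> \<omega>\<bar> * indicator (?C k) (y \<gamma> \<omega>)))) \<in> borel_measurable M" for \<gamma> k
    by (rule measurable_compose[OF tmr measurable_ennreal])
  have tm2: "(\<lambda>\<omega>. \<Sum>k. ennreal (wk ?d k * (\<bar>v \<gamma> \<omega>\<bar> * indicator (?C k) (y \<gamma> \<omega>)))) \<in> borel_measurable M" for \<gamma>
    by (rule borel_measurable_suminf_order[OF tm])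
  have Qm: "Qf y v \<in> borel_measurable M" unfolding Qf_def by (rule borel_measurable_suminf_order[OF tm2])
  have indm: "(\<lambda>\<omega>. indicator (?C k) (y \<gamma> \<omega>)::ennreal) \<in> borel_measurable M" for k \<gamma>
    by (rule measurable_compose[OF ym borel_measurable_indicator[OF Cb]])
  have abm: "(\<lambda>\<omega>. ennreal (\<bar>v \<gamma> \<omega>\<bar> * indicator (?C k) (y \<gamma> \<omega>))) \<in> borel_measurable M" for k \<gamma>
  proof -
    have "(\<lambda>\<omega>. indicator (?C k) (y \<gamma> \<omega>)::real) \<in> borel_measurable M"
      by (rule measurable_compose[OF ym borel_measurable_indicator[OF Cb]])
    moreover have "(\<lambda>\<omega>. \<bar>v \<gamma> \<omega>\<bar>) \<in> borel_measurable M" by (rule borel_measurable_abs[OF vm])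
    ultimately show ?thesis by (intro measurable_compose[OF _ measurable_ennreal] borel_measurable_times)
  qed
  define a where "a = (\<integral>\<omega>. \<bar>v 0 \<omega>\<bar> \<partial>M)"
  have it: "(\<integral>\<^sup>+\<omega>. ennreal (wk ?d k * (\<bar>v \<gamma> \<omega>\<bar> * indicator (?C k) (y \<gamma> \<omega>))) \<partial>M)
      = ennreal (wk ?d k) * (ennreal a * (\<integral>\<^sup>+\<omega>. indicator (?C k) (y \<gamma> \<omega>) \<partial>M))" for \<gamma> k
  proof -
    have "(\<integral>\<^sup>+\<omega>. ennreal (wk ?d k * (\<bar>v \<gamma> \<omega>\<bar> * indicator (?C k) (y \<gamma> \<omega>))) \<partial>M)
       = (\<integral>\<^sup>+\<omega>. ennreal (wk ?d k) * ennreal (\<bar>v \<gamma> \<omega>\<bar> * indicator (?C k) (y \<gamma> \<omega>)) \<partial>M)"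
      by (intro nn_integral_cong ennreal_mult) (auto simp: wk_nonneg)
    also have "\<dots> = ennreal (wk ?d k) * (\<integral>\<^sup>+\<omega>. ennreal (\<bar>v \<gamma> \<omega>\<bar> * indicator (?C k) (y \<gamma> \<omega>)) \<partial>M)"
      by (rule nn_integral_cmult[OF abm])
    also have "(\<integral>\<^sup>+\<omega>. ennreal (\<bar>v \<gamma> \<omega>\<bar> * indicator (?C k) (y \<gamma> \<omega>)) \<partial>M)
        = ennreal a * (\<integral>\<^sup>+\<omega>. indicator (?C k) (y \<gamma> \<omega>) \<partial>M)"
      unfolding a_def by (rule indep_term[OF P ym vm dist int0 ind Cb])
    finally show ?thesis .
  qed
  have "(\<integral>\<^sup>+\<omega>. Qf y v \<omega> \<partial>M)
      = (\<Sum>\<gamma>. \<integral>\<^sup>+\<omega>. (\<Sum>k. ennreal (wk ?d k * (\<bar>v \<gamma> \<omega>\<bar> * indicator (?C k) (y \<gamma> \<omega>)))) \<partial>M)"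
    unfolding Qf_def by (rule nn_integral_suminf[OF tm2])
  also have "\<dots> = (\<Sum>\<gamma>. \<Sum>k. \<integral>\<^sup>+\<omega>. ennreal (wk ?d k * (\<bar>v \<gamma> \<omega>\<bar> * indicator (?C k) (y \<gamma> \<omega>))) \<partial>M)"
    by (intro suminf_cong nn_integral_suminf tm)
  also have "\<dots> = (\<Sum>\<gamma>. \<Sum>k. ennreal (wk ?d k) * (ennreal a * (\<integral>\<^sup>+\<omega>. indicator (?C k) (y \<gamma> \<omega>) \<partial>M)))"
    by (simp only: it)
  also have "\<dots> = (\<Sum>k. \<Sum>\<gamma>. ennreal (wk ?d k) * (ennreal a * (\<integral>\<^sup>+\<omega>. indicator (?C k) (y \<gamma> \<omega>) \<partial>M)))"
    by (rule suminf_swap_ennreal)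
  also have "\<dots> = (\<Sum>k. ennreal (wk ?d k) * (ennreal a * (\<Sum>\<gamma>. \<integral>\<^sup>+\<omega>. indicator (?C k) (y \<gamma> \<omega>) \<partial>M)))"
    by simp
  also have "\<dots> = (\<Sum>k. ennreal (wk ?d k) * (ennreal a * ennreal (measure lborel (?C k))))"
  proof (rule suminf_cong)
    fix k
    have "(\<Sum>\<gamma>. \<integral>\<^sup>+\<omega>. indicator (?C k) (y \<gamma> \<omega>) \<partial>M) = (\<integral>\<^sup>+\<omega>. (\<Sum>\<gamma>. indicator (?C k) (y \<gamma> \<omega>)) \<partial>M)"
      by (rule nn_integral_suminf[symmetric, OF indm])
    then show "ennreal (wk ?d k) * (ennreal a * (\<Sum>\<gamma>. \<integral>\<^sup>+\<omega>. indicator (?C k) (y \<gamma> \<omega>) \<partial>M))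
        = ennreal (wk ?d k) * (ennreal a * ennreal (measure lborel (?C k)))" using cnt[of k] by simp
  qed
  also have "\<dots> \<le> (\<Sum>k. ennreal (a * 2 ^ (2 * ?d + 1) * (1 / 2) ^ k))"
  proof (rule suminf_le)
    fix k
    have "a \<ge> 0" unfolding a_def by simp
    then have "wk ?d k * (a * measure lborel (?C k)) \<le> wk ?d k * (a * (2 ^ (k + 1)) ^ ?d)"
      using Cf(3)[of k] wk_nonneg by (intro mult_left_mono) auto
    also have "\<dots> = a * 2 ^ (2 * ?d + 1) * (1 / 2) ^ k" using wk_geom[of ?d k] by (simp add: mult_ac)
    finally have "wk ?d k * (a * measure lborel (?C k)) \<le> a * 2 ^ (2 * ?d + 1) * (1 / 2) ^ k" .
    then show "ennreal (wk ?d k) * (ennreal a * ennreal (measure lborel (?C k)))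
        \<le> ennreal (a * 2 ^ (2 * ?d + 1) * (1 / 2) ^ k)"
      using \<open>a \<ge> 0\<close> wk_nonneg by (simp add: ennreal_mult[symmetric] ennreal_leI)
  qed auto
  also have "\<dots> = ennreal (\<Sum>k. a * 2 ^ (2 * ?d + 1) * (1 / 2) ^ k)"
  proof (rule suminf_ennreal2)
    have "a \<ge> 0" unfolding a_def by simp
    then show "\<And>k. 0 \<le> a * 2 ^ (2 * ?d + 1) * (1 / 2) ^ k" by simp
    show "summable (\<lambda>k. a * 2 ^ (2 * ?d + 1) * (1 / 2 :: real) ^ k)"
      by (intro summable_mult summable_geometric) simp
  qed
  also have "\<dots> < \<infinity>" by simp
  finally have "(\<integral>\<^sup>+\<omega>. Qf y v \<omega> \<partial>M) \<noteq> \<infinity>" by simp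
  then have "AE \<omega> in M. Qf y v \<omega> \<noteq> \<infinity>" by (rule nn_integral_PInf_AE[OF Qm])
  with AEfin show ?thesis by eventually_elim auto
qed



lemma Q_bound:
  fixes y :: "nat \<Rightarrow> 'w \<Rightarrow> real^'d" and v :: "nat \<Rightarrow> 'w \<Rightarrow> real"
  assumes Q: "Qf y v \<omega> \<noteq> \<infinity>" and F: "finite F"
  shows "(\<Sum>\<gamma>\<in>F. \<bar>v \<gamma> \<omega>\<bar> * Hf (real CARD('d) + 1) (y \<gamma> \<omega>)) \<le> enn2real (Qf y v \<omega>)"
proof -
  let ?p = "real CARD('d) + 1"
  define G where "G \<gamma> = (\<Sum>k. ennreal (wk CARD('d) k * (\<bar>v \<gamma> \<omega>\<bar> * indicator (cube (2 ^ (k + 1))) (y \<gamma> \<omega>))))" for \<gamma>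
  have pt: "ennreal (\<bar>v \<gamma> \<omega>\<bar> * Hf ?p (y \<gamma> \<omega>)) \<le> G \<gamma>" for \<gamma>
  proof (cases "1 \<le> tmax (y \<gamma> \<omega>)")
    case False
    then show ?thesis unfolding Hf_def by simp
  next
    case True
    obtain k where k: "y \<gamma> \<omega> \<in> cube (2 ^ (k + 1))" "Hf ?p (y \<gamma> \<omega>) \<le> wk CARD('d) k"
      using hf_bound[OF True] by blast
    have "\<bar>v \<gamma> \<omega>\<bar> * Hf ?p (y \<gamma> \<omega>) \<le> wk CARD('d) k * (\<bar>v \<gamma> \<omega>\<bar> * indicator (cube (2 ^ (k + 1))) (y \<gamma> \<omega>))"
    proof -
      have "\<bar>v \<gamma> \<omega>\<bar> * Hf ?p (y \<gamma> \<omega>) \<le> \<bar>v \<gamma> \<omega>\<bar> * wk CARD('d) k"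
        using k(2) by (rule mult_left_mono) simp
      then show ?thesis using k(1) by (simp add: mult.commute)
    qed
    then have "ennreal (\<bar>v \<gamma> \<omega>\<bar> * Hf ?p (y \<gamma> \<omega>))
        \<le> ennreal (wk CARD('d) k * (\<bar>v \<gamma> \<omega>\<bar> * indicator (cube (2 ^ (k + 1))) (y \<gamma> \<omega>)))"
      by (rule ennreal_leI)
    also have "\<dots> = (\<Sum>j\<in>{k}. ennreal (wk CARD('d) j * (\<bar>v \<gamma> \<omega>\<bar> * indicator (cube (2 ^ (j + 1))) (y \<gamma> \<omega>))))"
      by simp
    also have "\<dots> \<le> G \<gamma>" unfolding G_def by (rule sum_le_suminf) (auto intro: summableI)
    finally show ?thesis .
  qed
  have "ennreal (\<Sum>\<gamma>\<in>F. \<bar>v \<gamma> \<omega>\<bar> * Hf ?p (y \<gamma> \<omega>)) = (\<Sum>\<gamma>\<in>F. ennreal (\<bar>v \<gamma> \<omega>\<bar> * Hf ?p (y \<gamma> \<omega>)))"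
    by (rule sum_ennreal[symmetric]) (simp add: Hf_nonneg)
  also have "\<dots> \<le> (\<Sum>\<gamma>\<in>F. G \<gamma>)" by (rule sum_mono[OF pt])
  also have "\<dots> \<le> (\<Sum>\<gamma>. G \<gamma>)" by (rule sum_le_suminf) (auto intro: summableI F)
  also have "\<dots> = Qf y v \<omega>" unfolding G_def Qf_def ..
  finally have le: "ennreal (\<Sum>\<gamma>\<in>F. \<bar>v \<gamma> \<omega>\<bar> * Hf ?p (y \<gamma> \<omega>)) \<le> Qf y v \<omega>" .
  have nn: "0 \<le> (\<Sum>\<gamma>\<in>F. \<bar>v \<gamma> \<omega>\<bar> * Hf ?p (y \<gamma> \<omega>))" by (intro sum_nonneg) (simp add: Hf_nonneg)
  have "enn2real (ennreal (\<Sum>\<gamma>\<in>F. \<bar>v \<gamma> \<omega>\<bar> * Hf ?p (y \<gamma> \<omega>))) \<le> enn2real (Qf y v \<omega>)"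
    by (rule enn2real_mono[OF le]) (use Q in \<open>simp add: less_top\<close>)
  then show ?thesis using nn by simp
qed



lemma scale_bound:
  fixes L \<alpha> :: real
  assumes "0 \<le> \<alpha>" "\<alpha> < 1 / 2" "2 powr (1 / (1 / 2 - \<alpha>)) \<le> L"
  shows "L powr (1 / 2 + \<alpha>) \<le> L / 2"
proof -
  let ?b = "1 / 2 - \<alpha>"
  have b: "0 < ?b" using assms by simp
  have L0: "0 < L" using assms(3) by (smt (verit) powr_gt_zero)
  have "(2 powr (1 / ?b)) powr ?b \<le> L powr ?b"
    by (rule powr_mono2) (use b assms in auto)
  moreover have "(2 powr (1 / ?b)) powr ?b = 2" using b by (simp add: powr_powr)
  ultimately have h: "2 \<le> L powr ?b" by simp
  have "L = L powr ((1 / 2 + \<alpha>) + ?b)" using L0 by simp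
  also have "\<dots> = L powr (1 / 2 + \<alpha>) * L powr ?b" by (rule powr_add)
  finally have "L = L powr (1 / 2 + \<alpha>) * L powr ?b" .
  moreover have "L powr (1 / 2 + \<alpha>) * 2 \<le> L powr (1 / 2 + \<alpha>) * L powr ?b"
    using h by (intro mult_left_mono) auto
  ultimately show ?thesis by linarith
qed

theorem lemma5p1:
  fixes M :: "'w measure"
    and y :: "nat \<Rightarrow> 'w \<Rightarrow> real^'d"
    and v :: "nat \<Rightarrow> 'w \<Rightarrow> real"
    and B :: "real^'d \<Rightarrow> real"
    and C_B \<epsilon> \<alpha> :: real
  assumes "prob_space M"
    and "poisson_pp M y"
    and "prob_space.indep_vars M (\<lambda>_. borel) v UNIV"
    and "\<And>\<gamma>. distr M borel (v \<gamma>) = distr M borel (v 0)"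
    and "\<And>k. k \<in> {1..CARD('d) + 1} \<Longrightarrow> integrable M (\<lambda>\<omega>. (v 0 \<omega>) ^ k)"
    and "prob_space.indep_set M
           (sigma_sets (space M) {v \<gamma> -` A \<inter> space M | \<gamma> A. A \<in> sets borel})
           (sigma_sets (space M) {y \<gamma> -` A \<inter> space M | \<gamma> A. A \<in> sets borel})"
    and "B \<in> borel_measurable borel"
    and "\<epsilon> > 0"
    and "\<And>x. \<bar>B x\<bar> \<le> C_B * jbr x powr (- (real CARD('d) + 1 + \<epsilon>))"
    and "0 \<le> \<alpha>" and "\<alpha> < 1 / 2"
  shows "AE \<omega> in M. \<exists>C. \<exists>L0. \<forall>L L'. L0 \<le> L \<longrightarrow> L \<le> L' \<longrightarrow>
           (\<forall>x \<in> cube L.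
              \<bar>indicator ((\<lambda>z. (L powr (1 / 2 + \<alpha>)) *\<^sub>R z) ` cube (1 / 2)) x
                 * (potential L y v B \<omega> x - potential L' y v B \<omega> x)\<bar>
              \<le> C * L powr (- \<epsilon>))"
proof -
  interpret prob_space M by fact
  note P = assms(1) and pp = assms(2) and dist = assms(4) and ind = assms(6)
  note Bb = assms(9)
  have vm: "\<And>\<gamma>. v \<gamma> \<in> borel_measurable M"
    using assms(3) unfolding indep_vars_def by auto
  have int0: "integrable M (v 0)"
    using assms(5)[of 1] by simp
  have CB: "0 \<le> C_B" by (rule CB_nonneg[OF Bb])
  let ?p = "real CARD('d) + 1"
  let ?K = "C_B * 2 powr (?p + \<epsilon>) * (3 / 8) powr (- \<epsilon>)"
  have K0: "0 \<le> ?K" using CB by simp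
  have p0: "0 < real CARD('d) + 1" by simp
  show ?thesis
    using prob_part[OF P pp vm dist int0 ind]
  proof eventually_elim
    fix \<omega>
    assume h: "(\<forall>k. finite {\<gamma>. y \<gamma> \<omega> \<in> cube (2 ^ (k + 1))}) \<and> Qf y v \<omega> \<noteq> \<infinity>"
    define Qr where "Qr = enn2real (Qf y v \<omega>)"
    have Qr0: "0 \<le> Qr" unfolding Qr_def by simp
    define L0 where "L0 = max (8 / 3) (2 powr (1 / (1 / 2 - \<alpha>)))"
    show "\<exists>C L0. \<forall>L L'. L0 \<le> L \<longrightarrow> L \<le> L' \<longrightarrow>
           (\<forall>x \<in> cube L.
              \<bar>indicator ((\<lambda>z. (L powr (1 / 2 + \<alpha>)) *\<^sub>R z) ` cube (1 / 2)) x
                 * (potential L y v B \<omega> x - potential L' y v B \<omega> x)\<bar>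
              \<le> C * L powr (- \<epsilon>))"
    proof (intro exI allI impI ballI)
      fix L L' :: real and x :: "real^'d"
      assume L: "L0 \<le> L" and LL: "L \<le> L'" and x: "x \<in> cube L"
      have L83: "8 / 3 \<le> L" using L unfolding L0_def by simp
      have L2: "2 powr (1 / (1 / 2 - \<alpha>)) \<le> L" using L unfolding L0_def by simp
      have C0: "0 \<le> 2 * ?K * Qr * L powr (- \<epsilon>)" using K0 Qr0 by simp
      show "\<bar>indicator ((\<lambda>z. (L powr (1 / 2 + \<alpha>)) *\<^sub>R z) ` cube (1 / 2)) x
                 * (potential L y v B \<omega> x - potential L' y v B \<omega> x)\<bar>
              \<le> (2 * ?K * Qr) * L powr (- \<epsilon>)"
      proof (cases "x \<in> (\<lambda>z. (L powr (1 / 2 + \<alpha>)) *\<^sub>R z) ` cube (1 / 2)")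
        case False
        then show ?thesis using C0 by simp
      next
        case True
        then obtain z where z: "z \<in> cube (1 / 2)" "x = (L powr (1 / 2 + \<alpha>)) *\<^sub>R z" by blast
        have sL: "L powr (1 / 2 + \<alpha>) \<le> L / 2" by (rule scale_bound[OF assms(10,11) L2])
        have xb: "\<bar>x $ i\<bar> \<le> L / 8" for i
        proof -
          have "- (1 / 2) / 2 \<le> z $ i \<and> z $ i < (1 / 2) / 2" using z(1) unfolding cube_def by blast
          then have zi: "\<bar>z $ i\<bar> \<le> 1 / 4" by linarith
          have "\<bar>x $ i\<bar> = L powr (1 / 2 + \<alpha>) * \<bar>z $ i\<bar>" using z(2) by (simp add: abs_mult)
          also have "\<dots> \<le> L powr (1 / 2 + \<alpha>) * (1 / 4)" using zi by (intro mult_left_mono) auto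
          also have "\<dots> \<le> (L / 2) * (1 / 4)" using sL by (intro mult_right_mono) auto
          finally show ?thesis by simp
        qed
        obtain n where n: "L' < 2 ^ n" using real_arch_pow[of 2 L'] by auto
        have "cube L' \<subseteq> cube (2 ^ (n + 1))"
          by (rule cube_mono) (use L83 LL n in auto)
        then have sub: "{\<gamma>. y \<gamma> \<omega> \<in> cube L'} \<subseteq> {\<gamma>. y \<gamma> \<omega> \<in> cube (2 ^ (n + 1))}" by blast
        have fin: "finite {\<gamma>. y \<gamma> \<omega> \<in> cube L'}"
          using h finite_subset[OF sub] by blast
        have "\<bar>potential L y v B \<omega> x - potential L' y v B \<omega> x\<bar>
            \<le> 2 * ?K * L powr (- \<epsilon>) * (\<Sum>\<gamma>\<in>{\<gamma>. y \<gamma> \<omega> \<in> cube L'}. \<bar>v \<gamma> \<omega>\<bar> * Hf ?p (y \<gamma> \<omega>))"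
          by (rule det_bound[where p="real CARD('d) + 1" and y=y and v=v and \<omega>=\<omega> and B=B and CB=C_B, OF Bb assms(8) p0 L83 LL xb fin])
        also have "\<dots> \<le> 2 * ?K * L powr (- \<epsilon>) * Qr"
          unfolding Qr_def using Q_bound[of y v \<omega>, OF _ fin] h K0
          by (intro mult_left_mono) auto
        finally show ?thesis using True by (simp add: mult_ac)
      qed
    qed
  qed
qed

end
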